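(* Let $\mathsf{Syn}(\delta)$ be the free PROP on a single generator $\delta:1\to2$ (graph model in the context) and $\mathbf{FinCorel}$ the PROP of finite corelations. The assignment sending a morphism $f:m\to n$ of $\mathsf{Syn}(\delta)$ to its ancestry partition $\widetilde{\pi}(f)$ extends to a strict symmetric monoidal functor $\Pi:\mathsf{Syn}(\delta)\to\mathbf{FinCorel}$ which is the identity on objects.
   Context: A PROP is a strict symmetric monoidal category whose monoid of objects is $(\mathbb{N},+,0)$. Write $\underline{m}=\{1,\dots,m\}$. $\mathsf{Syn}(\delta)$: objects are natural numbers; a morphism $f:m\to n$ is an isomorphism class of finite directed acyclic graphs $G(f)$ with $m$ linearly ordered input half-edges, $n$ linearly ordered output half-edges, and a finite set of internal vertices, each with exactly one incoming half-edge and a linearly ordered pair of outgoing half-edges; isomorphisms preserve the boundary orders and vertex incidence. Composition glues outputs to inputs in order; tensor ($+$) is disjoint union with concatenated boundary orders; symmetries are wire crossings (not vertices, and they connect nothing beyond the wires they permute). $\mathbf{FinCorel}$: objects $\mathbb{N}$; morphisms $m\to n$ are equivalence relations on $\underline{m}\sqcup\underline{n}$; composite of $R:m\to n$, $S:n\to p$ is the restriction to $\underline{m}\sqcup\underline{p}$ of the equivalence relation generated by $R\cup S$ on $\underline{m}\sqcup\underline{n}\sqcup\underline{p}$; tensor is disjoint union with reindexing; symmetries are transposition corelations. Ancestry partition: for $f:m\to n$, let $|G(f)|$ be the underlying undirected graph of $G(f)$ with inputs attached as pendant vertices labelled by $\underline{m}$ and outputs as pendant vertices labelled by $\underline{n}$;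 $\widetilde\pi(f)$ is the equivalence relation on $\underline{m}\sqcup\underline{n}$ with $x\sim y$ iff pendants $x$ and $y$ lie in the same connected component of $|G(f)|$. *)

theory Defs
  imports Main
begin

text \<open>Boundary positions are 0-indexed: input i < m is Inl i, output j < n is Inr j.\<close>

definition bdry :: "nat \<Rightarrow> nat \<Rightarrow> (nat + nat) set" where
  "bdry m n = Inl ` {..<m} \<union> Inr ` {..<n}"

text \<open>A source of a wire: an input half-edge, or one of the two (ordered) outgoing
  half-edges of an internal vertex (False = first, True = second).
  A target of a wire: an output half-edge, or the unique incoming half-edge of a vertex.\<close>

datatype 'v src = SIn nat | SOut 'v bool
datatype 'v tgt = TOut nat | TIn 'v

text \<open>A diagram: finite vertex set together with the wiring, sending each source to the
  target it is glued to.\<close>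

type_synonym 'v diag = "'v set \<times> ('v src \<Rightarrow> 'v tgt)"

definition sources :: "nat \<Rightarrow> 'v set \<Rightarrow> 'v src set" where
  "sources m V = SIn ` {..<m} \<union> {SOut v b | v b. v \<in> V}"

definition targets :: "nat \<Rightarrow> 'v set \<Rightarrow> 'v tgt set" where
  "targets n V = TOut ` {..<n} \<union> TIn ` V"

definition succ_rel :: "'v diag \<Rightarrow> ('v \<times> 'v) set" where
  "succ_rel G = {(v, u). v \<in> fst G \<and> u \<in> fst G \<and> (\<exists>b. snd G (SOut v b) = TIn u)}"

definition is_diag :: "nat \<Rightarrow> nat \<Rightarrow> 'v diag \<Rightarrow> bool" where
  "is_diag m n G \<longleftrightarrow> finite (fst G)
     \<and> bij_betw (snd G) (sources m (fst G)) (targets n (fst G))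
     \<and> acyclic (succ_rel G)"

text \<open>Isomorphism of diagrams: a bijection of vertices preserving the wiring
  (boundary orders are preserved since boundary labels are fixed).\<close>

definition diag_iso :: "nat \<Rightarrow> 'v diag \<Rightarrow> 'w diag \<Rightarrow> bool" where
  "diag_iso m G H \<longleftrightarrow> (\<exists>\<phi>. bij_betw \<phi> (fst G) (fst H) \<and>
     (\<forall>s \<in> sources m (fst G). snd H (map_src \<phi> s) = map_tgt \<phi> (snd G s)))"

definition id_diag :: "nat \<Rightarrow> 'v diag" where
  "id_diag m = ({}, \<lambda>s. case s of SIn i \<Rightarrow> TOut i | SOut v b \<Rightarrow> TOut 0)"

definition sym_perm :: "nat \<Rightarrow> nat \<Rightarrow> nat \<Rightarrow> nat" where
  "sym_perm m n i = (if i < m then n + i else i - m)"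

definition sym_diag :: "nat \<Rightarrow> nat \<Rightarrow> 'v diag" where
  "sym_diag m n = ({}, \<lambda>s. case s of SIn i \<Rightarrow> TOut (sym_perm m n i) | SOut v b \<Rightarrow> TOut 0)"

definition liftH :: "'w tgt \<Rightarrow> ('v + 'w) tgt" where
  "liftH t = (case t of TIn u \<Rightarrow> TIn (Inr u) | TOut k \<Rightarrow> TOut k)"

definition throughG :: "('w src \<Rightarrow> 'w tgt) \<Rightarrow> 'v tgt \<Rightarrow> ('v + 'w) tgt" where
  "throughG wH t = (case t of TIn v \<Rightarrow> TIn (Inl v) | TOut j \<Rightarrow> liftH (wH (SIn j)))"

text \<open>Composition H o G of G : m -> n and H : n -> p (outputs of G glued to inputs of H).\<close>

definition comp_diag :: "'v diag \<Rightarrow> 'w diag \<Rightarrow> ('v + 'w) diag" where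
  "comp_diag G H = (Inl ` fst G \<union> Inr ` fst H,
     \<lambda>s. case s of
        SIn i \<Rightarrow> throughG (snd H) (snd G (SIn i))
      | SOut (Inl v) b \<Rightarrow> throughG (snd H) (snd G (SOut v b))
      | SOut (Inr u) b \<Rightarrow> liftH (snd H (SOut u b)))"

definition liftL :: "'v tgt \<Rightarrow> ('v + 'w) tgt" where
  "liftL t = (case t of TIn v \<Rightarrow> TIn (Inl v) | TOut j \<Rightarrow> TOut j)"

definition liftR :: "nat \<Rightarrow> 'w tgt \<Rightarrow> ('v + 'w) tgt" where
  "liftR n t = (case t of TIn u \<Rightarrow> TIn (Inr u) | TOut j \<Rightarrow> TOut (n + j))"

definition tensor_diag :: "nat \<Rightarrow> nat \<Rightarrow> 'v diag \<Rightarrow> 'w diag \<Rightarrow> ('v + 'w) diag" where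
  "tensor_diag m n G H = (Inl ` fst G \<union> Inr ` fst H,
     \<lambda>s. case s of
        SIn i \<Rightarrow> (if i < m then liftL (snd G (SIn i)) else liftR n (snd H (SIn (i - m))))
      | SOut (Inl v) b \<Rightarrow> liftL (snd G (SOut v b))
      | SOut (Inr u) b \<Rightarrow> liftR n (snd H (SOut u b)))"

text \<open>Nodes of the underlying undirected graph |G|: pendant boundary vertices (Inl) and
  internal vertices (Inr).\<close>

definition src_node :: "'v src \<Rightarrow> (nat + nat) + 'v" where
  "src_node s = (case s of SIn i \<Rightarrow> Inl (Inl i) | SOut v b \<Rightarrow> Inr v)"

definition tgt_node :: "'v tgt \<Rightarrow> (nat + nat) + 'v" where
  "tgt_node t = (case t of TOut j \<Rightarrow> Inl (Inr j) | TIn v \<Rightarrow> Inr v)"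

definition und_edges :: "nat \<Rightarrow> 'v diag \<Rightarrow> (((nat + nat) + 'v) \<times> ((nat + nat) + 'v)) set" where
  "und_edges m G = {(src_node s, tgt_node (snd G s)) | s. s \<in> sources m (fst G)}"

definition ancestry :: "nat \<Rightarrow> nat \<Rightarrow> 'v diag \<Rightarrow> ((nat + nat) \<times> (nat + nat)) set" where
  "ancestry m n G = {(x, y). x \<in> bdry m n \<and> y \<in> bdry m n \<and>
     (Inl x, Inl y) \<in> (und_edges m G \<union> (und_edges m G)\<inverse>)\<^sup>*}"

definition is_corel :: "nat \<Rightarrow> nat \<Rightarrow> ((nat + nat) \<times> (nat + nat)) set \<Rightarrow> bool" where
  "is_corel m n R \<longleftrightarrow> equiv (bdry m n) R"

definition emb1 :: "nat + nat \<Rightarrow> nat + nat + nat" where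
  "emb1 x = (case x of Inl i \<Rightarrow> Inl i | Inr j \<Rightarrow> Inr (Inl j))"

definition emb2 :: "nat + nat \<Rightarrow> nat + nat + nat" where
  "emb2 x = (case x of Inl j \<Rightarrow> Inr (Inl j) | Inr k \<Rightarrow> Inr (Inr k))"

definition emb13 :: "nat + nat \<Rightarrow> nat + nat + nat" where
  "emb13 x = (case x of Inl i \<Rightarrow> Inl i | Inr k \<Rightarrow> Inr (Inr k))"

definition corel_comp :: "nat \<Rightarrow> nat \<Rightarrow> ((nat + nat) \<times> (nat + nat)) set
    \<Rightarrow> ((nat + nat) \<times> (nat + nat)) set \<Rightarrow> ((nat + nat) \<times> (nat + nat)) set" where
  "corel_comp m p R S =
    (let E = map_prod emb1 emb1 ` R \<union> map_prod emb2 emb2 ` S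
     in {(x, y). x \<in> bdry m p \<and> y \<in> bdry m p \<and> (emb13 x, emb13 y) \<in> (E \<union> E\<inverse>)\<^sup>*})"

definition corel_of_perm :: "nat \<Rightarrow> (nat \<Rightarrow> nat) \<Rightarrow> ((nat + nat) \<times> (nat + nat)) set" where
  "corel_of_perm m f = (let P = {(Inl i, Inr (f i)) | i. i < m} in P \<union> P\<inverse> \<union> Id_on (bdry m m))"

definition corel_id :: "nat \<Rightarrow> ((nat + nat) \<times> (nat + nat)) set" where
  "corel_id m = corel_of_perm m id"

definition corel_sym :: "nat \<Rightarrow> nat \<Rightarrow> ((nat + nat) \<times> (nat + nat)) set" where
  "corel_sym m n = corel_of_perm (m + n) (sym_perm m n)"

definition corel_tensor :: "nat \<Rightarrow> nat \<Rightarrow> ((nat + nat) \<times> (nat + nat)) set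
    \<Rightarrow> ((nat + nat) \<times> (nat + nat)) set \<Rightarrow> ((nat + nat) \<times> (nat + nat)) set" where
  "corel_tensor m n R S =
     R \<union> map_prod (map_sum ((+) m) ((+) n)) (map_sum ((+) m) ((+) n)) ` S"

end

theory Submission
  imports Defs
begin


abbreviation conn :: "('a \<times> 'a) set \<Rightarrow> ('a \<times> 'a) set" where
  "conn E \<equiv> (E \<union> E\<inverse>)\<^sup>*"

lemma conn_sym: "(a, b) \<in> conn E \<Longrightarrow> (b, a) \<in> conn E"
  by (metis converse_Un converse_converse rtrancl_converseD sup_commute)

lemma conn_hom:
  assumes "\<And>a b. (a, b) \<in> E \<Longrightarrow> (g a, g b) \<in> conn E'"
    and "(x, y) \<in> conn E"
  shows "(g x, g y) \<in> conn E'"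
  using assms(2)
proof (induction rule: rtrancl_induct)
  case base then show ?case by simp
next
  case (step y z)
  have "(g y, g z) \<in> conn E'"
  proof (cases "(y, z) \<in> E")
    case True then show ?thesis using assms(1) by blast
  next
    case False then have "(z, y) \<in> E" using step(2) by blast
    then show ?thesis using assms(1) conn_sym by metis
  qed
  with step(3) show ?case by (rule rtrancl_trans)
qed

lemma conn_mono: "E \<subseteq> E' \<Longrightarrow> (a, b) \<in> conn E \<Longrightarrow> (a, b) \<in> conn E'"
  by (meson Un_mono converse_mono rtrancl_mono subsetD)

lemma ancestry_corel: "is_corel m n (ancestry m n G)"
  unfolding is_corel_def equiv_def
proof (intro conjI)
  show "ancestry m n G \<subseteq> bdry m n \<times> bdry m n" unfolding ancestry_def by blast
  show "refl_on (bdry m n) (ancestry m n G)"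
    unfolding refl_on_def ancestry_def by (blast intro: rtrancl.rtrancl_refl)
  show "sym (ancestry m n G)"
    unfolding sym_def ancestry_def
  proof (clarsimp)
    fix x y
    assume "(Inl x, Inl y) \<in> conn (und_edges m G)"
    then show "(Inl y, Inl x) \<in> conn (und_edges m G)" by (rule conn_sym)
  qed
  show "trans (ancestry m n G)"
    unfolding trans_def ancestry_def
  proof (clarsimp)
    fix x y z
    assume "(Inl x, Inl y) \<in> conn (und_edges m G)" "(Inl y, Inl z) \<in> conn (und_edges m G)"
    then show "(Inl x, Inl z) \<in> conn (und_edges m G)" by (rule rtrancl_trans)
  qed
qed

lemma conn_stay:
  assumes "E \<subseteq> A \<times> A" "(a, b) \<in> conn E" "a \<in> A"
  shows "b \<in> A"
  using assms(2,3) proof (induction rule: rtrancl_induct)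
  case base then show ?case by simp
next
  case (step y z) then show ?case using assms(1) by auto
qed

lemma conn_disj:
  assumes "E1 \<subseteq> A \<times> A" "E2 \<subseteq> C \<times> C" "A \<inter> C = {}"
    and "(a, b) \<in> conn (E1 \<union> E2)" "a \<in> A"
  shows "(a, b) \<in> conn E1"
  using assms(4,5) proof (induction rule: rtrancl_induct)
  case base then show ?case by simp
next
  case (step y z)
  have yA: "y \<in> A" using conn_stay[OF assms(1) step(3)[OF step(4)] step(4)] .
  have "(y, z) \<in> E1 \<union> E1\<inverse>" using step(2) yA assms(1-3) by auto
  then show ?case using step(3)[OF step(4)]
    by (meson rtrancl.rtrancl_into_rtrancl)
qed

lemma conn_inj:
  assumes "inj g" "(g a, g b) \<in> conn (map_prod g g ` E)"
  shows "(a, b) \<in> conn E"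
proof -
  have "(inv g (g a), inv g (g b)) \<in> conn E"
    by (rule conn_hom[OF _ assms(2)]) (auto simp: assms(1))
  then show ?thesis using assms(1) by simp
qed



lemma ancestry_perm:
  assumes E: "und_edges N G = {(Inl (Inl i), Inl (Inr (f i))) | i. i < N}"
    and inj: "inj_on f {..<N}" and rng: "f ` {..<N} \<subseteq> {..<M}"
  shows "ancestry N M G = (let P = {(Inl i, Inr (f i)) | i. i < N} in P \<union> P\<inverse> \<union> Id_on (bdry N M))"
proof -
  let ?E = "und_edges N G"
  have sub: "conn ?E \<subseteq> ?E \<union> ?E\<inverse> \<union> Id"
  proof
    fix z assume "z \<in> conn ?E"
    then obtain a b where z: "z = (a, b)" and ab: "(a, b) \<in> conn ?E" by (cases z) auto
    from ab have "(a, b) \<in> ?E \<union> ?E\<inverse> \<union> Id"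
    proof (induction rule: rtrancl_induct)
      case base then show ?case by simp
    next
      case (step y z)
      then show ?case unfolding E using inj by (auto simp: inj_on_def)
    qed
    then show "z \<in> ?E \<union> ?E\<inverse> \<union> Id" using z by simp
  qed
  show ?thesis
  proof (rule set_eqI, clarify)
    fix x y :: "nat + nat"
    show "((x, y) \<in> ancestry N M G) = ((x, y) \<in> (let P = {(Inl i, Inr (f i)) | i. i < N} in P \<union> P\<inverse> \<union> Id_on (bdry N M)))"
    proof
      assume "(x, y) \<in> ancestry N M G"
      then have xy: "x \<in> bdry N M" "y \<in> bdry N M" "(Inl x, Inl y) \<in> conn ?E"
        unfolding ancestry_def by auto
      then have "(Inl x, Inl y) \<in> ?E \<union> ?E\<inverse> \<union> Id" using sub by blast
      then show "(x, y) \<in> (let P = {(Inl i, Inr (f i)) | i. i < N} in P \<union> P\<inverse> \<union> Id_on (bdry N M))"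
        using xy(1,2) unfolding E by (auto simp: Id_on_def Let_def)
    next
      assume "(x, y) \<in> (let P = {(Inl i, Inr (f i)) | i. i < N} in P \<union> P\<inverse> \<union> Id_on (bdry N M))"
      then show "(x, y) \<in> ancestry N M G"
        unfolding ancestry_def Let_def E using rng
        by (auto simp: bdry_def Id_on_def)
    qed
  qed
qed

lemma ancestry_id: "ancestry m m (id_diag m :: 'v diag) = corel_id m"
proof -
  have "und_edges m (id_diag m :: 'v diag) = {(Inl (Inl i), Inl (Inr (id i))) | i. i < m}"
    unfolding und_edges_def id_diag_def sources_def apply (auto simp: src_node_def tgt_node_def)
    apply (rule_tac x="SIn i" in exI)
    apply auto
    done
  from ancestry_perm[OF this] show ?thesis unfolding corel_id_def corel_of_perm_def by simp
qed

lemma sym_perm_inj: "inj_on (sym_perm m n) {..<m+n}"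
  unfolding inj_on_def sym_perm_def by auto

lemma ancestry_sym: "ancestry (m + n) (n + m) (sym_diag m n :: 'v diag) = corel_sym m n"
proof -
  have "und_edges (m+n) (sym_diag m n :: 'v diag) = {(Inl (Inl i), Inl (Inr (sym_perm m n i))) | i. i < m+n}"
    unfolding und_edges_def sym_diag_def sources_def apply (auto simp: src_node_def tgt_node_def)
    apply (rule_tac x="SIn i" in exI)
    apply auto
    done
  moreover have "sym_perm m n ` {..<m+n} \<subseteq> {..<n+m}" by (auto simp: sym_perm_def)
  ultimately have "ancestry (m + n) (n + m) (sym_diag m n :: 'v diag) =
     (let P = {(Inl i, Inr (sym_perm m n i)) | i. i < m+n} in P \<union> P\<inverse> \<union> Id_on (bdry (m+n) (n+m)))"
    by (rule ancestry_perm[OF _ sym_perm_inj])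
  then show ?thesis unfolding corel_sym_def corel_of_perm_def by (simp add: add.commute)
qed



lemma map_src_in: "s \<in> sources m V \<Longrightarrow> g ` V \<subseteq> V' \<Longrightarrow> map_src g s \<in> sources m V'"
  unfolding sources_def by (cases s) auto

lemma map_src_inv: "s \<in> sources m V \<Longrightarrow> (\<forall>v\<in>V. f (g v) = v) \<Longrightarrow> map_src f (map_src g s) = s"
  unfolding sources_def by (cases s) auto

lemma map_tgt_inv: "t \<in> targets n V \<Longrightarrow> (\<forall>v\<in>V. f (g v) = v) \<Longrightarrow> map_tgt f (map_tgt g t) = t"
  unfolding targets_def by (cases t) auto

lemma src_node_map: "src_node (map_src g s) = map_sum id g (src_node s)"
  by (cases s) (auto simp: src_node_def)

lemma tgt_node_map: "tgt_node (map_tgt g t) = map_sum id g (tgt_node t)"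
  by (cases t) (auto simp: tgt_node_def)
lemma iso_sym:
  assumes G: "is_diag m n G" and iso: "diag_iso m G G'"
  shows "diag_iso m G' G"
proof -
  obtain \<phi> where bij: "bij_betw \<phi> (fst G) (fst G')"
    and w: "\<forall>s \<in> sources m (fst G). snd G' (map_src \<phi> s) = map_tgt \<phi> (snd G s)"
    using iso unfolding diag_iso_def by blast
  define \<psi> where "\<psi> = inv_into (fst G) \<phi>"
  have bij2: "bij_betw \<psi> (fst G') (fst G)" unfolding \<psi>_def by (rule bij_betw_inv_into[OF bij])
  have inv1: "\<forall>v\<in>fst G. \<psi> (\<phi> v) = v" unfolding \<psi>_def
    using bij_betw_inv_into_left[OF bij] by blast
  have inv2: "\<forall>v\<in>fst G'. \<phi> (\<psi> v) = v" unfolding \<psi>_def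
    using bij_betw_inv_into_right[OF bij] by blast
  have tg: "\<And>s. s \<in> sources m (fst G) \<Longrightarrow> snd G s \<in> targets n (fst G)"
  proof -
    fix s assume "s \<in> sources m (fst G)"
    moreover have "bij_betw (snd G) (sources m (fst G)) (targets n (fst G))"
      using G unfolding is_diag_def by blast
    ultimately show "snd G s \<in> targets n (fst G)" by (rule bij_betw_apply[rotated])
  qed
  have "\<forall>s' \<in> sources m (fst G'). snd G (map_src \<psi> s') = map_tgt \<psi> (snd G' s')"
  proof
    fix s' assume s': "s' \<in> sources m (fst G')"
    define s where "s = map_src \<psi> s'"
    have s: "s \<in> sources m (fst G)" unfolding s_def
      using map_src_in[OF s', of \<psi> "fst G"] bij2 by (simp add: bij_betw_def)
    have ss: "map_src \<phi> s = s'" unfolding s_def using map_src_inv[where f=\<phi> and g=\<psi>, OF s' inv2] .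
    have "map_tgt \<psi> (snd G' s') = map_tgt \<psi> (map_tgt \<phi> (snd G s))" using w[rule_format, OF s] ss by simp
    also have "\<dots> = snd G s" using map_tgt_inv[where f=\<psi> and g=\<phi>, OF tg[OF s] inv1] .
    finally show "snd G (map_src \<psi> s') = map_tgt \<psi> (snd G' s')" unfolding s_def by simp
  qed
  then show ?thesis unfolding diag_iso_def using bij2 by blast
qed

lemma ancestry_iso_sub:
  assumes iso: "diag_iso m G G'"
  shows "ancestry m n G \<subseteq> ancestry m n G'"
proof -
  obtain \<phi> where bij: "bij_betw \<phi> (fst G) (fst G')"
    and w: "\<forall>s \<in> sources m (fst G). snd G' (map_src \<phi> s) = map_tgt \<phi> (snd G s)"
    using iso unfolding diag_iso_def by blast
  have "\<And>a b. (a, b) \<in> und_edges m G \<Longrightarrow> (map_sum id \<phi> a, map_sum id \<phi> b) \<in> conn (und_edges m G')"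
  proof -
    fix a b assume "(a, b) \<in> und_edges m G"
    then obtain s where s: "s \<in> sources m (fst G)" and ab: "a = src_node s" "b = tgt_node (snd G s)"
      unfolding und_edges_def by blast
    have "map_src \<phi> s \<in> sources m (fst G')" using map_src_in[OF s, of \<phi> "fst G'"] bij by (simp add: bij_betw_def)
    then have "(src_node (map_src \<phi> s), tgt_node (snd G' (map_src \<phi> s))) \<in> und_edges m G'"
      unfolding und_edges_def by blast
    then have "(map_sum id \<phi> a, map_sum id \<phi> b) \<in> und_edges m G'"
      using w s ab by (simp add: src_node_map tgt_node_map)
    then show "(map_sum id \<phi> a, map_sum id \<phi> b) \<in> conn (und_edges m G')" by blast
  qed
  note h = conn_hom[of "und_edges m G" "map_sum id \<phi>", OF this]
  show ?thesis
  proof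
    fix z assume "z \<in> ancestry m n G"
    then obtain x y where "z = (x, y)" "x \<in> bdry m n" "y \<in> bdry m n"
       "(Inl x, Inl y) \<in> conn (und_edges m G)" unfolding ancestry_def by blast
    then show "z \<in> ancestry m n G'" using h[of "Inl x" "Inl y"] unfolding ancestry_def by simp
  qed
qed

lemma ancestry_iso:
  "is_diag m n G \<Longrightarrow> diag_iso m G G' \<Longrightarrow> ancestry m n G = ancestry m n G'"
  by (rule subset_antisym[OF ancestry_iso_sub ancestry_iso_sub[OF iso_sym]])



lemma und_edges_alt: "und_edges m G = (\<lambda>s. (src_node s, tgt_node (snd G s))) ` sources m (fst G)"
  unfolding und_edges_def by blast

lemma diag_tgt:
  assumes "is_diag m n G" "s \<in> sources m (fst G)"
  shows "snd G s \<in> targets n (fst G)"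
proof -
  have "bij_betw (snd G) (sources m (fst G)) (targets n (fst G))"
    using assms(1) unfolding is_diag_def by blast
  then show ?thesis using assms(2) by (rule bij_betw_apply)
qed

lemma edges_nodes:
  assumes "is_diag m n G"
  shows "und_edges m G \<subseteq> (Inl ` bdry m n \<union> Inr ` fst G) \<times> (Inl ` bdry m n \<union> Inr ` fst G)"
proof
  fix e assume "e \<in> und_edges m G"
  then obtain s where s: "s \<in> sources m (fst G)" and e: "e = (src_node s, tgt_node (snd G s))"
    unfolding und_edges_def by blast
  have t: "snd G s \<in> targets n (fst G)" using diag_tgt[OF assms s] .
  have 1: "src_node s \<in> Inl ` bdry m n \<union> Inr ` fst G"
    using s unfolding sources_def bdry_def src_node_def by auto
  have 2: "tgt_node (snd G s) \<in> Inl ` bdry m n \<union> Inr ` fst G"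
    using t unfolding targets_def bdry_def tgt_node_def by auto
  show "e \<in> (Inl ` bdry m n \<union> Inr ` fst G) \<times> (Inl ` bdry m n \<union> Inr ` fst G)"
    using 1 2 e by simp
qed

definition gL :: "(nat + nat) + 'v \<Rightarrow> (nat + nat) + ('v + 'w)" where
  "gL = map_sum id Inl"

definition gR :: "nat \<Rightarrow> nat \<Rightarrow> (nat + nat) + 'w \<Rightarrow> (nat + nat) + ('v + 'w)" where
  "gR m n = map_sum (map_sum ((+) m) ((+) n)) Inr"

lemma tgt_liftL: "tgt_node (liftL t) = gL (tgt_node t)"
  by (cases t) (auto simp: liftL_def gL_def tgt_node_def)

lemma tgt_liftR: "tgt_node (liftR n t) = gR m n (tgt_node t)"
  by (cases t) (auto simp: liftR_def gR_def tgt_node_def)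

lemma tensor_edges:
  "und_edges (m + m') (tensor_diag m n G H) =
     map_prod gL gL ` und_edges m G \<union> map_prod (gR m n) (gR m n) ` und_edges m' H"
proof (rule set_eqI)
  fix e
  show "e \<in> und_edges (m + m') (tensor_diag m n G H) \<longleftrightarrow>
     e \<in> map_prod gL gL ` und_edges m G \<union> map_prod (gR m n) (gR m n) ` und_edges m' H"
  proof
    assume "e \<in> und_edges (m + m') (tensor_diag m n G H)"
    then obtain s where s: "s \<in> sources (m + m') (Inl ` fst G \<union> Inr ` fst H)"
      and e: "e = (src_node s, tgt_node (snd (tensor_diag m n G H) s))"
      unfolding und_edges_def tensor_diag_def by auto
    show "e \<in> map_prod gL gL ` und_edges m G \<union> map_prod (gR m n) (gR m n) ` und_edges m' H"
    proof (cases s)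
      case (SIn i)
      show ?thesis
      proof (cases "i < m")
        case True
        have "(src_node (SIn i), tgt_node (snd G (SIn i))) \<in> und_edges m G"
          unfolding und_edges_def sources_def using True by blast
        moreover have "e = map_prod gL gL (src_node (SIn i), tgt_node (snd G (SIn i)))"
          using e SIn True by (simp add: tensor_diag_def tgt_liftL src_node_def gL_def)
        ultimately show ?thesis by blast
      next
        case False
        have "i < m + m'" using s SIn unfolding sources_def by auto
        then have "(src_node (SIn (i - m)), tgt_node (snd H (SIn (i - m)))) \<in> und_edges m' H"
          unfolding und_edges_def sources_def using False by force
        moreover have "e = map_prod (gR m n) (gR m n) (src_node (SIn (i - m)), tgt_node (snd H (SIn (i - m))))"
          using e SIn False by (simp add: tensor_diag_def tgt_liftR[where m=m] src_node_def gR_def)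
        ultimately show ?thesis by blast
      qed
    next
      case (SOut x b)
      show ?thesis
      proof (cases x)
        case (Inl v)
        have "v \<in> fst G" using s SOut Inl unfolding sources_def by auto
        then have "(src_node (SOut v b), tgt_node (snd G (SOut v b))) \<in> und_edges m G"
          unfolding und_edges_def sources_def by blast
        moreover have "e = map_prod gL gL (src_node (SOut v b), tgt_node (snd G (SOut v b)))"
          using e SOut Inl by (simp add: tensor_diag_def tgt_liftL src_node_def gL_def)
        ultimately show ?thesis by blast
      next
        case (Inr u)
        have "u \<in> fst H" using s SOut Inr unfolding sources_def by auto
        then have "(src_node (SOut u b), tgt_node (snd H (SOut u b))) \<in> und_edges m' H"
          unfolding und_edges_def sources_def by blast
        moreover have "e = map_prod (gR m n) (gR m n) (src_node (SOut u b), tgt_node (snd H (SOut u b)))"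
          using e SOut Inr by (simp add: tensor_diag_def tgt_liftR[where m=m] src_node_def gR_def)
        ultimately show ?thesis by blast
      qed
    qed
  next
    assume "e \<in> map_prod gL gL ` und_edges m G \<union> map_prod (gR m n) (gR m n) ` und_edges m' H"
    then show "e \<in> und_edges (m + m') (tensor_diag m n G H)"
    proof
      assume "e \<in> map_prod gL gL ` und_edges m G"
      then obtain s where s: "s \<in> sources m (fst G)"
        and e: "e = map_prod gL gL (src_node s, tgt_node (snd G s))"
        unfolding und_edges_alt image_image by blast
      show ?thesis
      proof (cases s)
        case (SIn i)
        then have i: "i < m" using s unfolding sources_def by auto
        have "SIn i \<in> sources (m + m') (fst (tensor_diag m n G H))"
          using i unfolding sources_def by auto
        moreover have "e = (src_node (SIn i), tgt_node (snd (tensor_diag m n G H) (SIn i)))"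
          using e SIn i by (simp add: tensor_diag_def tgt_liftL src_node_def gL_def)
        ultimately show ?thesis unfolding und_edges_def by blast
      next
        case (SOut v b)
        then have v: "v \<in> fst G" using s unfolding sources_def by auto
        have "SOut (Inl v) b \<in> sources (m + m') (fst (tensor_diag m n G H))"
          using v unfolding sources_def tensor_diag_def by auto
        moreover have "e = (src_node (SOut (Inl v) b), tgt_node (snd (tensor_diag m n G H) (SOut (Inl v) b)))"
          using e SOut by (simp add: tensor_diag_def tgt_liftL src_node_def gL_def)
        ultimately show ?thesis unfolding und_edges_def by blast
      qed
    next
      assume "e \<in> map_prod (gR m n) (gR m n) ` und_edges m' H"
      then obtain s where s: "s \<in> sources m' (fst H)"
        and e: "e = map_prod (gR m n) (gR m n) (src_node s, tgt_node (snd H s))"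
        unfolding und_edges_alt image_image by blast
      show ?thesis
      proof (cases s)
        case (SIn i)
        then have i: "i < m'" using s unfolding sources_def by auto
        have "SIn (m + i) \<in> sources (m + m') (fst (tensor_diag m n G H))"
          using i unfolding sources_def by auto
        moreover have "e = (src_node (SIn (m + i)), tgt_node (snd (tensor_diag m n G H) (SIn (m + i))))"
          using e SIn i by (simp add: tensor_diag_def tgt_liftR[where m=m] src_node_def gR_def)
        ultimately show ?thesis unfolding und_edges_def by blast
      next
        case (SOut u b)
        then have u: "u \<in> fst H" using s unfolding sources_def by auto
        have "SOut (Inr u) b \<in> sources (m + m') (fst (tensor_diag m n G H))"
          using u unfolding sources_def tensor_diag_def by auto
        moreover have "e = (src_node (SOut (Inr u) b), tgt_node (snd (tensor_diag m n G H) (SOut (Inr u) b)))"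
          using e SOut by (simp add: tensor_diag_def tgt_liftR[where m=m] src_node_def gR_def)
        ultimately show ?thesis unfolding und_edges_def by blast
      qed
    qed
  qed
qed



lemma gL_inj: "inj (gL :: (nat + nat) + 'v \<Rightarrow> (nat + nat) + ('v + 'w))"
proof (rule injI)
  fix x y :: "(nat + nat) + 'v"
  assume "(gL x :: (nat + nat) + ('v + 'w)) = gL y"
  then show "x = y" unfolding gL_def
    by (cases x; cases y) (auto simp: map_sum_def split: sum.splits)
qed

lemma gR_inj: "inj (gR m n :: (nat + nat) + 'w \<Rightarrow> (nat + nat) + ('v + 'w))"
proof (rule injI)
  fix x y :: "(nat + nat) + 'w"
  assume "(gR m n x :: (nat + nat) + ('v + 'w)) = gR m n y"
  then show "x = y" unfolding gR_def
    by (cases x; cases y) (auto simp: map_sum_def split: sum.splits)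
qed

lemma ancestry_tensor:
  fixes G :: "'v diag" and H :: "'w diag"
  assumes G: "is_diag m n G" and H: "is_diag m' n' H"
  shows "ancestry (m + m') (n + n') (tensor_diag m n G H)
            = corel_tensor m n (ancestry m n G) (ancestry m' n' H)"
proof -
  let ?sh = "map_sum ((+) m) ((+) n)"
  let ?gL = "gL :: (nat + nat) + 'v \<Rightarrow> (nat + nat) + ('v + 'w)"
  let ?gR = "gR m n :: (nat + nat) + 'w \<Rightarrow> (nat + nat) + ('v + 'w)"
  let ?NG = "Inl ` bdry m n \<union> Inr ` fst G"
  let ?NH = "Inl ` bdry m' n' \<union> Inr ` fst H"
  let ?E1 = "map_prod ?gL ?gL ` und_edges m G"
  let ?E2 = "map_prod ?gR ?gR ` und_edges m' H"
  let ?A = "?gL ` ?NG"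
  let ?C = "?gR ` ?NH"
  have E: "und_edges (m + m') (tensor_diag m n G H) = ?E1 \<union> ?E2" by (rule tensor_edges)
  have e1: "?E1 \<subseteq> ?A \<times> ?A" using edges_nodes[OF G] by auto
  have e2: "?E2 \<subseteq> ?C \<times> ?C" using edges_nodes[OF H] by auto
  have AC: "?A \<inter> ?C = {}" by (auto simp: gL_def gR_def bdry_def)
  have gLx: "\<And>x. ?gL (Inl x) = Inl x" by (simp add: gL_def)
  have gRx: "\<And>x. ?gR (Inl x) = Inl (?sh x)" by (simp add: gR_def)
  have bd: "\<And>x. x \<in> bdry (m + m') (n + n') \<Longrightarrow> x \<in> bdry m n \<or> (\<exists>x0 \<in> bdry m' n'. x = ?sh x0)"
  proof -
    fix x assume x: "x \<in> bdry (m + m') (n + n')"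
    show "x \<in> bdry m n \<or> (\<exists>x0 \<in> bdry m' n'. x = ?sh x0)"
    proof (cases x)
      case (Inl i)
      show ?thesis
      proof (cases "i < m")
        case False
        then have "Inl (i - m) \<in> bdry m' n'" "x = ?sh (Inl (i - m))" using x Inl by (auto simp: bdry_def)
        then show ?thesis by blast
      qed (use Inl in \<open>auto simp: bdry_def\<close>)
    next
      case (Inr i)
      show ?thesis
      proof (cases "i < n")
        case False
        then have "Inr (i - n) \<in> bdry m' n'" "x = ?sh (Inr (i - n))" using x Inr by (auto simp: bdry_def)
        then show ?thesis by blast
      qed (use Inr in \<open>auto simp: bdry_def\<close>)
    qed
  qed
  have bd1: "bdry m n \<subseteq> bdry (m + m') (n + n')" by (auto simp: bdry_def)
  have bd2: "?sh ` bdry m' n' \<subseteq> bdry (m + m') (n + n')" by (auto simp: bdry_def)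
  show ?thesis
  proof (rule set_eqI, clarify)
    fix x y
    show "(x, y) \<in> ancestry (m + m') (n + n') (tensor_diag m n G H) \<longleftrightarrow>
          (x, y) \<in> corel_tensor m n (ancestry m n G) (ancestry m' n' H)"
    proof
      assume "(x, y) \<in> ancestry (m + m') (n + n') (tensor_diag m n G H)"
      then have xb: "x \<in> bdry (m + m') (n + n')" and yb: "y \<in> bdry (m + m') (n + n')"
        and p: "(Inl x, Inl y) \<in> conn (?E1 \<union> ?E2)"
        unfolding ancestry_def E by auto
      from bd[OF xb] show "(x, y) \<in> corel_tensor m n (ancestry m n G) (ancestry m' n' H)"
      proof
        assume x: "x \<in> bdry m n"
        have xa: "Inl x \<in> ?A" using x gLx by (metis UnI1 image_eqI)
        have p1: "(Inl x, Inl y) \<in> conn ?E1" by (rule conn_disj[OF e1 e2 AC p xa])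
        have "Inl y \<in> ?A" by (rule conn_stay[OF e1 p1 xa])
        then have y: "y \<in> bdry m n" by (auto simp: gL_def)
        have "(?gL (Inl x), ?gL (Inl y)) \<in> conn ?E1" using p1 gLx by simp
        then have "(Inl x, Inl y) \<in> conn (und_edges m G)" by (rule conn_inj[OF gL_inj])
        then have "(x, y) \<in> ancestry m n G" using x y unfolding ancestry_def by simp
        then show ?thesis unfolding corel_tensor_def by simp
      next
        assume "\<exists>x0 \<in> bdry m' n'. x = ?sh x0"
        then obtain x0 where x0: "x0 \<in> bdry m' n'" and x: "x = ?sh x0" by blast
        have xa: "Inl x \<in> ?C" using x0 x gRx by (metis UnI1 image_eqI)
        have p': "(Inl x, Inl y) \<in> conn (?E2 \<union> ?E1)" using p by (simp add: Un_commute)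
        have AC': "?C \<inter> ?A = {}" using AC by blast
        have p1: "(Inl x, Inl y) \<in> conn ?E2" by (rule conn_disj[OF e2 e1 AC' p' xa])
        have "Inl y \<in> ?C" by (rule conn_stay[OF e2 p1 xa])
        then obtain y0 where y0: "y0 \<in> bdry m' n'" and y: "y = ?sh y0" by (auto simp: gR_def)
        have "(?gR (Inl x0), ?gR (Inl y0)) \<in> conn ?E2" using p1 gRx x y by simp
        then have "(Inl x0, Inl y0) \<in> conn (und_edges m' H)" by (rule conn_inj[OF gR_inj])
        then have "(x0, y0) \<in> ancestry m' n' H" using x0 y0 unfolding ancestry_def by simp
        then show ?thesis unfolding corel_tensor_def using x y by blast
      qed
    next
      assume "(x, y) \<in> corel_tensor m n (ancestry m n G) (ancestry m' n' H)"
      then show "(x, y) \<in> ancestry (m + m') (n + n') (tensor_diag m n G H)"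
        unfolding corel_tensor_def
      proof
        assume "(x, y) \<in> ancestry m n G"
        then have x: "x \<in> bdry m n" and y: "y \<in> bdry m n"
          and p: "(Inl x, Inl y) \<in> conn (und_edges m G)" unfolding ancestry_def by auto
        have "(?gL (Inl x), ?gL (Inl y)) \<in> conn ?E1"
          by (rule conn_hom[OF _ p]) blast
        then have "(Inl x, Inl y) \<in> conn (?E1 \<union> ?E2)" using gLx conn_mono[of ?E1 "?E1 \<union> ?E2"] by simp
        then show ?thesis unfolding ancestry_def E using x y bd1 by blast
      next
        assume "(x, y) \<in> map_prod ?sh ?sh ` ancestry m' n' H"
        then obtain x0 y0 where xy: "x = ?sh x0" "y = ?sh y0" and "(x0, y0) \<in> ancestry m' n' H" by auto
        then have x: "x0 \<in> bdry m' n'" and y: "y0 \<in> bdry m' n'"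
          and p: "(Inl x0, Inl y0) \<in> conn (und_edges m' H)" unfolding ancestry_def by auto
        have "(?gR (Inl x0), ?gR (Inl y0)) \<in> conn ?E2"
          by (rule conn_hom[OF _ p]) blast
        then have "(Inl x, Inl y) \<in> conn (?E1 \<union> ?E2)" using gRx xy conn_mono[of ?E2 "?E1 \<union> ?E2"] by simp
        then show ?thesis unfolding ancestry_def E using x y xy bd2 by blast
      qed
    qed
  qed
qed



lemma glue:
  assumes e1: "E1 \<subseteq> (K \<union> I1) \<times> (K \<union> I1)" and e2: "E2 \<subseteq> (K \<union> I2) \<times> (K \<union> I2)"
    and d1: "K \<inter> I1 = {}" and d2: "K \<inter> I2 = {}" and d3: "I1 \<inter> I2 = {}"
    and a: "a \<in> K" and p: "(a, b) \<in> conn (E1 \<union> E2)"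
    and Q: "Q = {(x, y). x \<in> K \<and> y \<in> K \<and> ((x, y) \<in> conn E1 \<or> (x, y) \<in> conn E2)}"
  shows "(b \<in> K \<and> (a, b) \<in> Q\<^sup>*) \<or> (\<exists>k\<in>K. (a, k) \<in> Q\<^sup>* \<and> (k, b) \<in> conn E1 \<and> b \<in> I1)
         \<or> (\<exists>k\<in>K. (a, k) \<in> Q\<^sup>* \<and> (k, b) \<in> conn E2 \<and> b \<in> I2)"
  using p
proof (induction rule: rtrancl_induct)
  case base then show ?case using a by simp
next
  case (step y z)
  have st: "(y, z) \<in> E1 \<union> E1\<inverse> \<or> (y, z) \<in> E2 \<union> E2\<inverse>" using step(2) by blast
  then show ?case
  proof
    assume yz: "(y, z) \<in> E1 \<union> E1\<inverse>"
    have yK: "y \<in> K \<union> I1" "z \<in> K \<union> I1" using yz e1 by auto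
    have c1: "(y, z) \<in> conn E1" using yz by blast
    from step(3) show ?case
    proof (elim disjE conjE bexE)
      assume "y \<in> K" "(a, y) \<in> Q\<^sup>*"
      show ?case
      proof (cases "z \<in> K")
        case True
        then have "(y, z) \<in> Q" using \<open>y \<in> K\<close> c1 Q by blast
        then show ?thesis using \<open>(a, y) \<in> Q\<^sup>*\<close> True by (meson rtrancl.rtrancl_into_rtrancl)
      next
        case False
        then show ?thesis using \<open>y \<in> K\<close> \<open>(a, y) \<in> Q\<^sup>*\<close> c1 yK by blast
      qed
    next
      fix k assume k: "k \<in> K" "(a, k) \<in> Q\<^sup>*" "(k, y) \<in> conn E1" "y \<in> I1"
      have kz: "(k, z) \<in> conn E1" using k(3) yz by (meson rtrancl.rtrancl_into_rtrancl)
      show ?case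
      proof (cases "z \<in> K")
        case True
        then have "(k, z) \<in> Q" using k kz Q by blast
        then show ?thesis using k(2) True by (meson rtrancl.rtrancl_into_rtrancl)
      next
        case False
        then show ?thesis using k kz yK by blast
      qed
    next
      fix k assume k: "k \<in> K" "(a, k) \<in> Q\<^sup>*" "(k, y) \<in> conn E2" "y \<in> I2"
      then show ?case using yK d1 d2 d3 by blast
    qed
  next
    assume yz: "(y, z) \<in> E2 \<union> E2\<inverse>"
    have yK: "y \<in> K \<union> I2" "z \<in> K \<union> I2" using yz e2 by auto
    have c1: "(y, z) \<in> conn E2" using yz by blast
    from step(3) show ?case
    proof (elim disjE conjE bexE)
      assume "y \<in> K" "(a, y) \<in> Q\<^sup>*"
      show ?case
      proof (cases "z \<in> K")
        case True
        then have "(y, z) \<in> Q" using \<open>y \<in> K\<close> c1 Q by blast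
        then show ?thesis using \<open>(a, y) \<in> Q\<^sup>*\<close> True by (meson rtrancl.rtrancl_into_rtrancl)
      next
        case False
        then show ?thesis using \<open>y \<in> K\<close> \<open>(a, y) \<in> Q\<^sup>*\<close> c1 yK by blast
      qed
    next
      fix k assume k: "k \<in> K" "(a, k) \<in> Q\<^sup>*" "(k, y) \<in> conn E1" "y \<in> I1"
      then show ?case using yK d1 d2 d3 by blast
    next
      fix k assume k: "k \<in> K" "(a, k) \<in> Q\<^sup>*" "(k, y) \<in> conn E2" "y \<in> I2"
      have kz: "(k, z) \<in> conn E2" using k(3) yz by (meson rtrancl.rtrancl_into_rtrancl)
      show ?case
      proof (cases "z \<in> K")
        case True
        then have "(k, z) \<in> Q" using k kz Q by blast
        then show ?thesis using k(2) True by (meson rtrancl.rtrancl_into_rtrancl)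
      next
        case False
        then show ?thesis using k kz yK by blast
      qed
    qed
  qed
qed

lemma glue_K:
  assumes "E1 \<subseteq> (K \<union> I1) \<times> (K \<union> I1)" "E2 \<subseteq> (K \<union> I2) \<times> (K \<union> I2)"
    "K \<inter> I1 = {}" "K \<inter> I2 = {}" "I1 \<inter> I2 = {}"
    "a \<in> K" "b \<in> K" "(a, b) \<in> conn (E1 \<union> E2)"
  shows "(a, b) \<in> {(x, y). x \<in> K \<and> y \<in> K \<and> ((x, y) \<in> conn E1 \<or> (x, y) \<in> conn E2)}\<^sup>*"
  using glue[OF assms(1-6,8) refl] assms(3,4,7) by blast

lemma conn_out:
  assumes "E \<subseteq> A \<times> A" "a \<notin> A" "(a, b) \<in> conn E"
  shows "b = a"
  using assms(3) proof (induction rule: rtrancl_induct)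
  case base then show ?case by simp
next
  case (step y z) then show ?case using assms(1,2) by auto
qed



definition fG :: "(nat + nat) + 'v \<Rightarrow> (nat + nat + nat) + ('v + 'w)" where
  "fG = map_sum emb1 Inl"

definition fH :: "(nat + nat) + 'w \<Rightarrow> (nat + nat + nat) + ('v + 'w)" where
  "fH = map_sum emb2 Inr"

definition hC :: "(nat + nat) + ('v + 'w) \<Rightarrow> (nat + nat + nat) + ('v + 'w)" where
  "hC = map_sum emb13 id"

definition kmap :: "('w src \<Rightarrow> 'w tgt) \<Rightarrow> nat + nat + nat \<Rightarrow> (nat + nat) + ('v + 'w)" where
  "kmap wH x = (case x of Inl i \<Rightarrow> Inl (Inl i)
      | Inr (Inl j) \<Rightarrow> tgt_node (liftH (wH (SIn j)) :: ('v + 'w) tgt)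
      | Inr (Inr k) \<Rightarrow> Inl (Inr k))"

lemma comp_fst: "fst (comp_diag G H) = Inl ` fst G \<union> Inr ` fst H"
  by (simp add: comp_diag_def)

lemma comp_snd_L: "snd (comp_diag G H) (map_src Inl s) = throughG (snd H) (snd G s)"
  by (cases s) (simp_all add: comp_diag_def)

lemma comp_snd_R: "snd (comp_diag G H) (SOut (Inr u) b) = liftH (snd H (SOut u b))"
  by (simp add: comp_diag_def)

lemma src_L: "s \<in> sources m V \<Longrightarrow> map_src Inl s \<in> sources m (Inl ` V \<union> Inr ` W)"
  unfolding sources_def by (cases s) auto

lemma src_R: "u \<in> W \<Longrightarrow> SOut (Inr u) b \<in> sources m (Inl ` V \<union> Inr ` W)"
  unfolding sources_def by auto

lemma comp_sources_cases:
  assumes "s \<in> sources m (Inl ` V \<union> Inr ` W)"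
  obtains s0 where "s0 \<in> sources m V" "s = map_src Inl s0"
    | u b where "u \<in> W" "s = SOut (Inr u) b"
proof (cases s)
  case (SIn i)
  then have "SIn i \<in> sources m V" "s = map_src Inl (SIn i)" using assms unfolding sources_def by auto
  then show ?thesis using that by blast
next
  case (SOut x b)
  then show ?thesis
  proof (cases x)
    case (Inl v)
    then have "SOut v b \<in> sources m V" "s = map_src Inl (SOut v b)" using assms SOut unfolding sources_def by auto
    then show ?thesis using that by blast
  next
    case (Inr u)
    then have "u \<in> W" using assms SOut unfolding sources_def by auto
    then show ?thesis using that SOut Inr by blast
  qed
qed

lemma hC_liftH: "hC (tgt_node (liftH t) :: (nat + nat) + ('v + 'w)) = (fH (tgt_node t) :: (nat + nat + nat) + ('v + 'w))"
  by (cases t) (simp_all add: hC_def fH_def liftH_def tgt_node_def emb13_def emb2_def)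

lemma hC_src: "hC (src_node (map_src Inl s) :: (nat + nat) + ('v + 'w)) = (fG (src_node s) :: (nat + nat + nat) + ('v + 'w))"
  by (cases s) (simp_all add: hC_def fG_def src_node_def emb13_def emb1_def)

lemma comp_edge_B:
  fixes G :: "'v diag" and H :: "'w diag"
  assumes G: "is_diag m n G"
    and s: "s \<in> sources m (fst (comp_diag G H))"
  shows "(hC (src_node s), hC (tgt_node (snd (comp_diag G H) s)))
     \<in> conn (map_prod fG fG ` und_edges m G \<union> map_prod fH fH ` und_edges n H)"
    (is "_ \<in> conn ?B")
proof -
  from s[unfolded comp_fst] show ?thesis
  proof (cases rule: comp_sources_cases)
    case (1 s0)
    have t: "snd G s0 \<in> targets n (fst G)" by (rule diag_tgt[OF G 1(1)])
    have eG: "(src_node s0, tgt_node (snd G s0)) \<in> und_edges m G" using 1(1) unfolding und_edges_def by blast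
    have src: "hC (src_node s) = fG (src_node s0)" using 1(2) hC_src by simp
    show ?thesis
    proof (cases "snd G s0")
      case (TIn v)
      have "hC (tgt_node (snd (comp_diag G H) s)) = fG (tgt_node (snd G s0))"
        using 1(2) TIn by (simp add: comp_snd_L throughG_def hC_def fG_def tgt_node_def)
      then have "(hC (src_node s), hC (tgt_node (snd (comp_diag G H) s))) \<in> ?B"
        using src eG by force
      then show ?thesis by (meson UnI1 r_into_rtrancl)
    next
      case (TOut j)
      then have j: "j < n" using t unfolding targets_def by auto
      have tg: "hC (tgt_node (snd (comp_diag G H) s)) = fH (tgt_node (snd H (SIn j)))"
        using 1(2) TOut by (simp add: comp_snd_L throughG_def hC_liftH)
      have eH: "(src_node (SIn j), tgt_node (snd H (SIn j))) \<in> und_edges n H"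
        using j unfolding und_edges_def sources_def by blast
      have mid: "fG (tgt_node (snd G s0)) = fH (src_node (SIn j))"
        using TOut by (simp add: fG_def fH_def tgt_node_def src_node_def emb1_def emb2_def)
      have a1: "(fG (src_node s0), fG (tgt_node (snd G s0))) \<in> ?B" using eG by force
      have a2: "(fH (src_node (SIn j)), fH (tgt_node (snd H (SIn j)))) \<in> ?B" using eH by force
      have c1: "(fG (src_node s0), fG (tgt_node (snd G s0))) \<in> conn ?B"
        using a1 by (meson UnI1 r_into_rtrancl)
      have c2: "(fH (src_node (SIn j)), fH (tgt_node (snd H (SIn j)))) \<in> conn ?B"
        using a2 by (meson UnI1 r_into_rtrancl)
      have "(fG (src_node s0), fH (tgt_node (snd H (SIn j)))) \<in> conn ?B"
        using c1 c2[folded mid] by (rule rtrancl_trans)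
      then show ?thesis using src tg by simp
    qed
  next
    case (2 u b)
    have eH: "(src_node (SOut u b), tgt_node (snd H (SOut u b))) \<in> und_edges n H"
      using 2(1) unfolding und_edges_def sources_def by blast
    have "hC (src_node s) = fH (src_node (SOut u b))"
      using 2(2) by (simp add: hC_def fH_def src_node_def)
    moreover have "hC (tgt_node (snd (comp_diag G H) s)) = fH (tgt_node (snd H (SOut u b)))"
      using 2(2) by (simp add: comp_snd_R hC_liftH)
    ultimately have "(hC (src_node s), hC (tgt_node (snd (comp_diag G H) s))) \<in> ?B"
      using eH by force
    then show ?thesis by (meson UnI1 r_into_rtrancl)
  qed
qed



lemma kmap_emb13: "(kmap wH (emb13 x) :: (nat + nat) + ('v + 'w)) = Inl x"
  by (cases x) (simp_all add: kmap_def emb13_def)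

lemma G_edge_C:
  fixes G :: "'v diag" and H :: "'w diag"
  assumes "(a, b) \<in> und_edges m G"
  shows "(case_sum (kmap (snd H) \<circ> emb1) (Inr \<circ> Inl) a, case_sum (kmap (snd H) \<circ> emb1) (Inr \<circ> Inl) b)
     \<in> conn (und_edges m (comp_diag G H))"
proof -
  obtain s0 where s0: "s0 \<in> sources m (fst G)" and ab: "a = src_node s0" "b = tgt_node (snd G s0)"
    using assms unfolding und_edges_def by blast
  let ?q = "case_sum (kmap (snd H) \<circ> emb1) (Inr \<circ> Inl) :: (nat + nat) + 'v \<Rightarrow> (nat + nat) + ('v + 'w)"
  have 1: "?q (src_node s0) = src_node (map_src Inl s0)"
    by (cases s0) (simp_all add: src_node_def kmap_def emb1_def)
  have 2: "?q (tgt_node t) = tgt_node (throughG (snd H) t)" for t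
    by (cases t) (simp_all add: tgt_node_def kmap_def emb1_def throughG_def)
  have "map_src Inl s0 \<in> sources m (fst (comp_diag G H))"
    unfolding comp_fst by (rule src_L[OF s0])
  then have "(src_node (map_src Inl s0), tgt_node (snd (comp_diag G H) (map_src Inl s0)))
      \<in> und_edges m (comp_diag G H)" unfolding und_edges_def by blast
  then have "(?q a, ?q b) \<in> und_edges m (comp_diag G H)"
    using ab 1 2 by (simp add: comp_snd_L)
  then show ?thesis by (meson UnI1 r_into_rtrancl)
qed

lemma H_edge_C:
  fixes G :: "'v diag" and H :: "'w diag"
  assumes "(a, b) \<in> und_edges n H"
  shows "(case_sum (kmap (snd H) \<circ> emb2) (Inr \<circ> Inr) a, case_sum (kmap (snd H) \<circ> emb2) (Inr \<circ> Inr) b)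
     \<in> conn (und_edges m (comp_diag G H))"
proof -
  obtain s0 where s0: "s0 \<in> sources n (fst H)" and ab: "a = src_node s0" "b = tgt_node (snd H s0)"
    using assms unfolding und_edges_def by blast
  let ?q = "case_sum (kmap (snd H) \<circ> emb2) (Inr \<circ> Inr) :: (nat + nat) + 'w \<Rightarrow> (nat + nat) + ('v + 'w)"
  have 2: "?q (tgt_node t) = tgt_node (liftH t :: ('v + 'w) tgt)" for t
    by (cases t) (simp_all add: tgt_node_def kmap_def emb2_def liftH_def)
  show ?thesis
  proof (cases s0)
    case (SIn j)
    have "?q a = tgt_node (liftH (snd H (SIn j)) :: ('v + 'w) tgt)"
      using ab SIn by (simp add: src_node_def kmap_def emb2_def)
    moreover have "?q b = tgt_node (liftH (snd H (SIn j)) :: ('v + 'w) tgt)"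
      using ab SIn 2 by simp
    ultimately show ?thesis by simp
  next
    case (SOut u c)
    then have u: "u \<in> fst H" using s0 unfolding sources_def by auto
    have "SOut (Inr u) c \<in> sources m (fst (comp_diag G H))"
      unfolding comp_fst by (rule src_R[OF u])
    then have "(src_node (SOut (Inr u) c), tgt_node (snd (comp_diag G H) (SOut (Inr u) c)))
      \<in> und_edges m (comp_diag G H)" unfolding und_edges_def by blast
    then have "(?q a, ?q b) \<in> und_edges m (comp_diag G H)"
      using ab SOut 2 by (simp add: comp_snd_R src_node_def)
    then show ?thesis by (meson UnI1 r_into_rtrancl)
  qed
qed

lemma comp_sup:
  fixes G :: "'v diag" and H :: "'w diag"
  shows "corel_comp m p (ancestry m n G) (ancestry n p H) \<subseteq> ancestry m p (comp_diag G H)"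
proof (clarify)
  fix x y
  assume "(x, y) \<in> corel_comp m p (ancestry m n G) (ancestry n p H)"
  then have xy: "x \<in> bdry m p" "y \<in> bdry m p"
    and c: "(emb13 x, emb13 y) \<in> conn (map_prod emb1 emb1 ` ancestry m n G \<union> map_prod emb2 emb2 ` ancestry n p H)"
    unfolding corel_comp_def Let_def by auto
  let ?k = "kmap (snd H) :: nat + nat + nat \<Rightarrow> (nat + nat) + ('v + 'w)"
  have "(?k (emb13 x), ?k (emb13 y)) \<in> conn (und_edges m (comp_diag G H))"
  proof (rule conn_hom[OF _ c])
    fix a b assume "(a, b) \<in> map_prod emb1 emb1 ` ancestry m n G \<union> map_prod emb2 emb2 ` ancestry n p H"
    then show "(?k a, ?k b) \<in> conn (und_edges m (comp_diag G H))"
    proof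
      assume "(a, b) \<in> map_prod emb1 emb1 ` ancestry m n G"
      then obtain a0 b0 where ab: "a = emb1 a0" "b = emb1 b0" and r: "(Inl a0, Inl b0) \<in> conn (und_edges m G)"
        unfolding ancestry_def by auto
      have "(case_sum (?k \<circ> emb1) (Inr \<circ> Inl) (Inl a0), case_sum (?k \<circ> emb1) (Inr \<circ> Inl) (Inl b0))
         \<in> conn (und_edges m (comp_diag G H))"
        by (rule conn_hom[OF _ r]) (rule G_edge_C)
      then show ?thesis using ab by simp
    next
      assume "(a, b) \<in> map_prod emb2 emb2 ` ancestry n p H"
      then obtain a0 b0 where ab: "a = emb2 a0" "b = emb2 b0" and r: "(Inl a0, Inl b0) \<in> conn (und_edges n H)"
        unfolding ancestry_def by auto
      have "(case_sum (?k \<circ> emb2) (Inr \<circ> Inr) (Inl a0), case_sum (?k \<circ> emb2) (Inr \<circ> Inr) (Inl b0))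
         \<in> conn (und_edges m (comp_diag G H))"
        by (rule conn_hom[OF _ r]) (rule H_edge_C)
      then show ?thesis using ab by simp
    qed
  qed
  then show "(x, y) \<in> ancestry m p (comp_diag G H)"
    unfolding ancestry_def using xy by (simp add: kmap_emb13)
qed



lemma side:
  fixes f :: "(nat + nat) + 'a \<Rightarrow> (nat + nat + nat) + 'b" and e :: "nat + nat \<Rightarrow> nat + nat + nat"
  assumes inj: "inj f" and fl: "\<And>x. f (Inl x) = Inl (e x)" and fr: "\<And>v. f (Inr v) \<notin> range Inl"
    and EN: "E \<subseteq> (Inl ` bd \<union> Inr ` V) \<times> (Inl ` bd \<union> Inr ` V)"
    and p: "(k, c) \<in> conn (map_prod f f ` E)" and k: "k \<in> range Inl" and c: "c \<in> range Inl"
  shows "k = c \<or> (\<exists>k0 c0. k0 \<in> bd \<and> c0 \<in> bd \<and> (Inl k0, Inl c0) \<in> conn E \<and> k = Inl (e k0) \<and> c = Inl (e c0))"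
proof -
  let ?N = "Inl ` bd \<union> Inr ` V"
  let ?A = "f ` ?N"
  have EA: "map_prod f f ` E \<subseteq> ?A \<times> ?A" using EN by auto
  show ?thesis
  proof (cases "k \<in> ?A")
    case False
    then show ?thesis using conn_out[OF EA False p] by simp
  next
    case True
    have cA: "c \<in> ?A" by (rule conn_stay[OF EA p True])
    have pre: "\<And>z. z \<in> ?A \<Longrightarrow> z \<in> range Inl \<Longrightarrow> \<exists>z0 \<in> bd. z = f (Inl z0)"
    proof -
      fix z assume "z \<in> ?A" "z \<in> range Inl"
      then obtain w where w: "w \<in> ?N" "z = f w" by blast
      show "\<exists>z0 \<in> bd. z = f (Inl z0)"
      proof (cases w)
        case (Inl z0) then show ?thesis using w by auto
      next
        case (Inr v) then show ?thesis using w fr \<open>z \<in> range Inl\<close> by blast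
      qed
    qed
    obtain k0 where k0: "k0 \<in> bd" "k = f (Inl k0)" using pre[OF True k] by blast
    obtain c0 where c0: "c0 \<in> bd" "c = f (Inl c0)" using pre[OF cA c] by blast
    have "(Inl k0, Inl c0) \<in> conn E" using conn_inj[OF inj] p k0 c0 by simp
    then show ?thesis using k0 c0 fl by blast
  qed
qed

lemma emb1_inj: "inj emb1"
  by (rule injI) (auto simp: emb1_def split: sum.splits)

lemma emb2_inj: "inj emb2"
  by (rule injI) (auto simp: emb2_def split: sum.splits)

lemma fG_inj: "inj (fG :: (nat + nat) + 'v \<Rightarrow> (nat + nat + nat) + ('v + 'w))"
proof (rule injI)
  fix x y :: "(nat + nat) + 'v"
  assume "(fG x :: (nat + nat + nat) + ('v + 'w)) = fG y"
  then show "x = y" unfolding fG_def using emb1_inj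
    by (cases x; cases y) (auto simp: inj_eq)
qed

lemma fH_inj: "inj (fH :: (nat + nat) + 'w \<Rightarrow> (nat + nat + nat) + ('v + 'w))"
proof (rule injI)
  fix x y :: "(nat + nat) + 'w"
  assume "(fH x :: (nat + nat + nat) + ('v + 'w)) = fH y"
  then show "x = y" unfolding fH_def using emb2_inj
    by (cases x; cases y) (auto simp: inj_eq)
qed

lemma comp_sub:
  fixes G :: "'v diag" and H :: "'w diag"
  assumes G: "is_diag m n G" and H: "is_diag n p H"
  shows "ancestry m p (comp_diag G H) \<subseteq> corel_comp m p (ancestry m n G) (ancestry n p H)"
proof (clarify)
  fix x y
  assume "(x, y) \<in> ancestry m p (comp_diag G H)"
  then have xy: "x \<in> bdry m p" "y \<in> bdry m p"
    and c: "(Inl x, Inl y) \<in> conn (und_edges m (comp_diag G H))"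
    unfolding ancestry_def by auto
  let ?E1 = "map_prod fG fG ` und_edges m G :: (((nat + nat + nat) + ('v + 'w)) \<times> _) set"
  let ?E2 = "map_prod fH fH ` und_edges n H :: (((nat + nat + nat) + ('v + 'w)) \<times> _) set"
  let ?Ec = "map_prod emb1 emb1 ` ancestry m n G \<union> map_prod emb2 emb2 ` ancestry n p H"
  let ?Ec' = "map_prod Inl Inl ` ?Ec :: (((nat + nat + nat) + ('v + 'w)) \<times> _) set"
  let ?K = "range Inl :: ((nat + nat + nat) + ('v + 'w)) set"
  let ?I1 = "Inr ` range Inl :: ((nat + nat + nat) + ('v + 'w)) set"
  let ?I2 = "Inr ` range Inr :: ((nat + nat + nat) + ('v + 'w)) set"
  have "(hC (Inl x), hC (Inl y)) \<in> conn (?E1 \<union> ?E2)"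
  proof (rule conn_hom[OF _ c])
    fix a b assume "(a, b) \<in> und_edges m (comp_diag G H)"
    then obtain s where s: "s \<in> sources m (fst (comp_diag G H))"
      and ab: "a = src_node s" "b = tgt_node (snd (comp_diag G H) s)"
      unfolding und_edges_def by blast
    show "(hC a, hC b) \<in> conn (?E1 \<union> ?E2)" using comp_edge_B[OF G s] ab by simp
  qed
  then have p1: "(Inl (emb13 x), Inl (emb13 y)) \<in> conn (?E1 \<union> ?E2)" by (simp add: hC_def)
  have e1: "?E1 \<subseteq> (?K \<union> ?I1) \<times> (?K \<union> ?I1)"
  proof -
    have "\<And>z. (fG z :: (nat + nat + nat) + ('v + 'w)) \<in> ?K \<union> ?I1"
      by (case_tac z) (auto simp: fG_def)
    then show ?thesis by auto
  qed
  have e2: "?E2 \<subseteq> (?K \<union> ?I2) \<times> (?K \<union> ?I2)"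
  proof -
    have "\<And>z. (fH z :: (nat + nat + nat) + ('v + 'w)) \<in> ?K \<union> ?I2"
      by (case_tac z) (auto simp: fH_def)
    then show ?thesis by auto
  qed
  have gl: "(Inl (emb13 x), Inl (emb13 y)) \<in> {(a, b). a \<in> ?K \<and> b \<in> ?K \<and> ((a, b) \<in> conn ?E1 \<or> (a, b) \<in> conn ?E2)}\<^sup>*"
    by (rule glue_K[OF e1 e2 _ _ _ _ _ p1]) auto
  have Qsub: "{(a, b). a \<in> ?K \<and> b \<in> ?K \<and> ((a, b) \<in> conn ?E1 \<or> (a, b) \<in> conn ?E2)} \<subseteq> conn ?Ec'"
  proof
    fix z assume "z \<in> {(a, b). a \<in> ?K \<and> b \<in> ?K \<and> ((a, b) \<in> conn ?E1 \<or> (a, b) \<in> conn ?E2)}"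
    then obtain a b where z: "z = (a, b)" and a: "a \<in> ?K" and b: "b \<in> ?K"
      and ab: "(a, b) \<in> conn ?E1 \<or> (a, b) \<in> conn ?E2" by blast
    from ab have "(a, b) \<in> conn ?Ec'"
    proof
      assume ab: "(a, b) \<in> conn ?E1"
      have fl: "\<And>z. (fG (Inl z) :: (nat + nat + nat) + ('v + 'w)) = Inl (emb1 z)" by (simp add: fG_def)
      have fr: "\<And>v. (fG (Inr v) :: (nat + nat + nat) + ('v + 'w)) \<notin> range Inl" by (auto simp: fG_def)
      from side[OF fG_inj fl fr edges_nodes[OF G] ab a b] show ?thesis
      proof
        assume "a = b" then show ?thesis by simp
      next
        assume "\<exists>k0 c0. k0 \<in> bdry m n \<and> c0 \<in> bdry m n \<and> (Inl k0, Inl c0) \<in> conn (und_edges m G)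
           \<and> a = Inl (emb1 k0) \<and> b = Inl (emb1 c0)"
        then obtain k0 c0 where "(k0, c0) \<in> ancestry m n G" "a = Inl (emb1 k0)" "b = Inl (emb1 c0)"
          unfolding ancestry_def by blast
        then have "(a, b) \<in> ?Ec'" by blast
        then show ?thesis by (meson UnI1 r_into_rtrancl)
      qed
    next
      assume ab: "(a, b) \<in> conn ?E2"
      have fl: "\<And>z. (fH (Inl z) :: (nat + nat + nat) + ('v + 'w)) = Inl (emb2 z)" by (simp add: fH_def)
      have fr: "\<And>v. (fH (Inr v) :: (nat + nat + nat) + ('v + 'w)) \<notin> range Inl" by (auto simp: fH_def)
      from side[OF fH_inj fl fr edges_nodes[OF H] ab a b] show ?thesis
      proof
        assume "a = b" then show ?thesis by simp
      next
        assume "\<exists>k0 c0. k0 \<in> bdry n p \<and> c0 \<in> bdry n p \<and> (Inl k0, Inl c0) \<in> conn (und_edges n H)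
           \<and> a = Inl (emb2 k0) \<and> b = Inl (emb2 c0)"
        then obtain k0 c0 where "(k0, c0) \<in> ancestry n p H" "a = Inl (emb2 k0)" "b = Inl (emb2 c0)"
          unfolding ancestry_def by blast
        then have "(a, b) \<in> ?Ec'" by blast
        then show ?thesis by (meson UnI1 r_into_rtrancl)
      qed
    qed
    then show "z \<in> conn ?Ec'" using z by simp
  qed
  have "(Inl (emb13 x), Inl (emb13 y)) \<in> conn ?Ec'"
    using subsetD[OF rtrancl_mono[OF Qsub] gl] unfolding rtrancl_idemp .
  moreover have iI: "inj (Inl :: nat + nat + nat \<Rightarrow> (nat + nat + nat) + ('v + 'w))"
    by (rule injI) simp
  ultimately have "(emb13 x, emb13 y) \<in> conn ?Ec"
    using conn_inj[OF iI] by blast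
  then show "(x, y) \<in> corel_comp m p (ancestry m n G) (ancestry n p H)"
    unfolding corel_comp_def Let_def using xy by simp
qed

lemma ancestry_comp:
  fixes G :: "'v diag" and H :: "'w diag"
  assumes G: "is_diag m n G" and H: "is_diag n p H"
  shows "ancestry m p (comp_diag G H) = corel_comp m p (ancestry m n G) (ancestry n p H)"
  using comp_sub[OF G H] comp_sup by (rule subset_antisym)


theorem theorem2p7:
  shows
  \<comment> \<open>Pi sends a morphism m -> n to a corelation m -> n (identity on objects)\<close>
  "(\<forall>m n (G :: 'v diag). is_diag m n G \<longrightarrow> is_corel m n (ancestry m n G))
   \<comment> \<open>well defined on isomorphism classes\<close>
   \<and> (\<forall>m n (G :: 'v diag) (G' :: 'w diag). is_diag m n G \<and> is_diag m n G' \<and> diag_iso m G G'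
        \<longrightarrow> ancestry m n G = ancestry m n G')
   \<comment> \<open>preserves identities\<close>
   \<and> (\<forall>m. ancestry m m (id_diag m :: 'v diag) = corel_id m)
   \<comment> \<open>preserves composition\<close>
   \<and> (\<forall>m n p (G :: 'v diag) (H :: 'w diag). is_diag m n G \<and> is_diag n p H
        \<longrightarrow> ancestry m p (comp_diag G H) = corel_comp m p (ancestry m n G) (ancestry n p H))
   \<comment> \<open>strict monoidal: preserves tensor\<close>
   \<and> (\<forall>m n m' n' (G :: 'v diag) (H :: 'w diag). is_diag m n G \<and> is_diag m' n' H
        \<longrightarrow> ancestry (m + m') (n + n') (tensor_diag m n G H)
            = corel_tensor m n (ancestry m n G) (ancestry m' n' H))
   \<comment> \<open>symmetric: preserves symmetries\<close>
   \<and> (\<forall>m n. ancestry (m + n) (n + m) (sym_diag m n :: 'v diag) = corel_sym m n)"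
  proof (intro conjI allI impI)
  fix m n and G :: "'v diag"
  show "is_corel m n (ancestry m n G)" by (rule ancestry_corel)
next
  fix m n and G :: "'v diag" and G' :: "'w diag"
  assume a: "is_diag m n G \<and> is_diag m n G' \<and> diag_iso m G G'"
  then show "ancestry m n G = ancestry m n G'" using ancestry_iso by blast
next
  fix m show "ancestry m m (id_diag m :: 'v diag) = corel_id m" by (rule ancestry_id)
next
  fix m n p and G :: "'v diag" and H :: "'w diag"
  assume a: "is_diag m n G \<and> is_diag n p H"
  then show "ancestry m p (comp_diag G H) = corel_comp m p (ancestry m n G) (ancestry n p H)"
    using ancestry_comp by blast
next
  fix m n m' n' and G :: "'v diag" and H :: "'w diag"
  assume a: "is_diag m n G \<and> is_diag m' n' H"
  then show "ancestry (m + m') (n + n') (tensor_diag m n G H)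
            = corel_tensor m n (ancestry m n G) (ancestry m' n' H)"
    using ancestry_tensor by blast
next
  fix m n show "ancestry (m + n) (n + m) (sym_diag m n :: 'v diag) = corel_sym m n"
    by (rule ancestry_sym)
qed

end
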